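(* Let $q$ be an odd prime power, $g\ge 1$, $X,T$ positive integers, and let $\mathcal{Y}$ be a hyperelliptic curve of genus $g$ over $\mathbb{F}_{q^2}$ with affine equation $y^2=f(x)$, $f(x)=x^{2g+1}+a_{2g}x^{2g}+\dots+a_0\in\mathbb{F}_{q^2}[x]$. Let $J^{\mathcal{Y}}_{\max}$ be the largest integer $J$ for which there exist pairwise distinct $\lambda_1,\dots,\lambda_J\in\mathbb{F}_{q^2}$ with $f(\lambda_j)\ne0$ such that, with $h=\prod_{j=1}^J(x-\lambda_j)$, $\mathcal{Y}$ has at least $2J+X+T+6g+2$ affine $\mathbb{F}_{q^2}$-rational points $P$ with $y(P)\ne 0$, $h(P)\ne 0$, and put $\mathcal{R}^{\mathcal{Y}}_{\max}=\frac{2J^{\mathcal{Y}}_{\max}-g}{2J^{\mathcal{Y}}_{\max}+X+T+5g+2}$. Let $$\mathcal{R}^{\mathcal{H}_q}_{\max}=\frac{L}{L+X+T+3q^2-q-2},\qquad L=mq-\frac{q(q-1)}{2},\quad m=\left\lfloor\frac{q^3-3q^2+q+1-(X+T)}{2q}\right\rfloor.$$ Then $\mathcal{R}^{\mathcal{H}_q}_{\max}>\mathcal{R}^{\mathcal{Y}}_{\max}$ if one of the following holds: (i) $X+T\ge 3(2q+3)$, $g=1$ and $q>31$; (ii) $X+T\ge 3(2q+3)$, $g>1$ and $q>5$.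
   Context: $\mathcal{R}^{\mathcal{Y}}_{\max}$ is the maximal rate of the known $X$-secure $T$-private PIR construction from hyperelliptic curves over $\mathbb{F}_{q^2}$ (rate $L/N$ with $L=2J-g$, $N=L+X+T+6g+2$), and $\mathcal{R}^{\mathcal{H}_q}_{\max}$ is the maximal rate of the PIR construction from the Hermitian curve $X^{q+1}=Y^q+Y$ over $\mathbb{F}_{q^2}$. *)

theory Defs
  imports "HOL-Computational_Algebra.Computational_Algebra" "HOL-Library.Cardinality"
begin

definition good_points :: "'a::field poly \<Rightarrow> 'a set \<Rightarrow> ('a \<times> 'a) set" where
  "good_points f Lam = {(x, y). y ^ 2 = poly f x \<and> y \<noteq> 0 \<and> poly (\<Prod>l\<in>Lam. [:- l, 1:]) x \<noteq> 0}"

definition admissible_J :: "'a::{finite,field} poly \<Rightarrow> nat \<Rightarrow> nat \<Rightarrow> nat \<Rightarrow> nat \<Rightarrow> bool" where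
  "admissible_J f g X T J \<longleftrightarrow>
     (\<exists>lam :: nat \<Rightarrow> 'a. inj_on lam {1..J} \<and> (\<forall>j\<in>{1..J}. poly f (lam j) \<noteq> 0) \<and>
        card (good_points f (lam ` {1..J})) \<ge> 2 * J + X + T + 6 * g + 2)"

definition J_max_Y :: "'a::{finite,field} poly \<Rightarrow> nat \<Rightarrow> nat \<Rightarrow> nat \<Rightarrow> nat" where
  "J_max_Y f g X T = (GREATEST J. admissible_J f g X T J)"

definition R_max_Y :: "'a::{finite,field} poly \<Rightarrow> nat \<Rightarrow> nat \<Rightarrow> nat \<Rightarrow> real" where
  "R_max_Y f g X T =
     (let J = J_max_Y f g X T in
       (2 * real J - real g) / (2 * real J + real X + real T + 5 * real g + 2))"

definition R_max_H :: "nat \<Rightarrow> nat \<Rightarrow> nat \<Rightarrow> real" where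
  "R_max_H q X T =
     (let m = \<lfloor>(real q ^ 3 - 3 * real q ^ 2 + real q + 1 - (real X + real T)) / (2 * real q)\<rfloor>;
          L = real_of_int m * real q - real q * (real q - 1) / 2
      in L / (L + real X + real T + 3 * real q ^ 2 - real q - 2))"

end

theory Submission
  imports Defs
begin

lemma core:
  fixes q g s u m :: real
  assumes q7: "q \<ge> 7" and g1: "g \<ge> 1" and gq: "g \<ge> 2 \<or> (g = 1 \<and> q \<ge> 33)"
    and s0: "s \<ge> 6*q+9" and u0: "u \<ge> 0" and ub: "2*u + s + 6*g + 2 \<le> 2*q^2"
    and mb: "2*q*m \<ge> q^3-3*q^2+q+1-s - 2*q + 1"
  shows "(u-g)/(u+s+5*g+2) < (m*q - q*(q-1)/2)/((m*q - q*(q-1)/2) + s + 3*q^2 - q - 2)"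
proof -
  define L where "L = m*q - q*(q-1)/2"
  define A where "A = s + 3*q^2 - q - 2"
  define B where "B = s + 6*g + 2"
  define Lb where "Lb = (q^3-4*q^2+2-s)/2"
  have "2*L = 2*q*m - q*(q-1)" unfolding L_def by (simp add: field_simps)
  hence LLb: "L \<ge> Lb" using mb unfolding Lb_def by (simp add: power2_eq_square power3_eq_cube algebra_simps)
  have qq: "q^3 \<ge> 7*q^2" using q7 by (simp add: power2_eq_square power3_eq_cube)
  have "q*q \<ge> 7*7" using q7 by (intro mult_mono) auto
  hence q2: "q^2 \<ge> 49" by (simp add: power2_eq_square)
  have "q^3 - 4*q^2 + 2 - s > 0" using qq q2 ub u0 g1 by linarith
  hence "Lb > 0" unfolding Lb_def by simp
  have Apos: "A > 0" unfolding A_def using q2 s0 q7 by linarith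
  have Bpos: "B > 0" unfolding B_def using s0 g1 q7 by linarith
  have "q*q \<ge> 7*q" using q7 by (intro mult_right_mono) auto
  hence q2b: "q^2 \<ge> 7*q" by (simp add: power2_eq_square)
  have c0: "q^3-3*q^2-q+2*g > 0" using qq q2 q2b q7 g1 by linarith
  have P: "s*(q^3-3*q^2-q+2*g) + (-6*q^4 + (6*g+4)*q^3 + 2*q^2 - (8*g+2)*q - 4*g) > 0"
  proof -
    have "s*(q^3-3*q^2-q+2*g) \<ge> (6*q+9)*(q^3-3*q^2-q+2*g)"
      using s0 c0 by (intro mult_right_mono) auto
    moreover have "(6*q+9)*(q^3-3*q^2-q+2*g) + (-6*q^4 + (6*g+4)*q^3 + 2*q^2 - (8*g+2)*q - 4*g)
        = (6*g-5)*q^3 - 31*q^2 - 11*q + 4*g*q + 14*g"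
      by (simp add: algebra_simps power2_eq_square power3_eq_cube power4_eq_xxxx)
    moreover have "(6*g-5)*q^3 - 31*q^2 - 11*q > 0"
      using gq
    proof
      assume "g \<ge> 2"
      hence "(6*g-5)*q^3 \<ge> 7*q^3" by (intro mult_right_mono) (use q7 in auto)
      thus ?thesis using qq q2 q2b by linarith
    next
      assume h: "g = 1 \<and> q \<ge> 33"
      have "q^3 \<ge> 33*q^2" using h by (simp add: power2_eq_square power3_eq_cube)
      thus ?thesis using h q2 q2b by simp
    qed
    moreover have "4*g*q > 0" using g1 q7 by simp
    ultimately show ?thesis using g1 by linarith
  qed
  have key: "A*(q^2 - B/2 - g) < B*Lb"
  proof -
    have "B*Lb - A*(q^2 - B/2 - g) = (s*(q^3-3*q^2-q+2*g) + (-6*q^4 + (6*g+4)*q^3 + 2*q^2 - (8*g+2)*q - 4*g))/2"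
      unfolding A_def B_def Lb_def by (simp add: algebra_simps power2_eq_square power3_eq_cube power4_eq_xxxx divide_simps)
    hence "B*Lb - A*(q^2 - B/2 - g) > 0" using P by simp
    thus ?thesis by simp
  qed
  have "u - g \<le> q^2 - B/2 - g" using ub unfolding B_def by (simp add: field_simps)
  hence h1: "A*(u-g) \<le> A*(q^2 - B/2 - g)" using Apos by (intro mult_left_mono) auto
  have h2: "B*Lb \<le> B*L" using LLb Bpos by simp
  have main: "A*(u-g) < B*L" using key h1 h2 by linarith
  have d1: "u+s+5*g+2 > 0" using u0 s0 g1 q7 by linarith
  have d2: "L + A > 0" using LLb \<open>Lb>0\<close> Apos by linarith
  have "(u-g)/(u+s+5*g+2) < L/(L+A)"
    using main d1 d2 unfolding B_def by (simp add: divide_simps algebra_simps)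
  thus ?thesis unfolding L_def A_def by (simp add: algebra_simps)
qed

lemma card_sq_le: "card {y::'a::field. y^2 = c} \<le> 2"
proof (cases "\<exists>y0::'a. y0^2 = c")
  case False
  hence "{y::'a. y^2 = c} = {}" by auto
  thus ?thesis by simp
next
  case True
  then obtain y0 :: 'a where h: "y0^2 = c" by blast
  have "{y::'a. y^2 = c} \<subseteq> {y0, -y0}"
  proof
    fix y assume "y \<in> {y::'a. y^2 = c}"
    hence "y^2 = y0^2" using h by simp
    hence "(y - y0)*(y + y0) = 0" by (simp add: algebra_simps power2_eq_square)
    thus "y \<in> {y0, -y0}" by (auto simp: add_eq_0_iff2)
  qed
  hence "card {y::'a. y^2 = c} \<le> card {y0, -y0}" by (intro card_mono) auto
  also have "\<dots> \<le> 2" by (simp add: card_insert_if)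
  finally show ?thesis .
qed

lemma card_good:
  fixes f :: "'a::{finite,field} poly"
  shows "card (good_points f Lam) \<le> 2 * (CARD('a) - card Lam)"
proof -
  have sub: "good_points f Lam \<subseteq> (\<Union>x\<in>-Lam. {x} \<times> {y. y^2 = poly f x})"
  proof
    fix p assume p: "p \<in> good_points f Lam"
    obtain x y where pxy: "p = (x, y)" by fastforce
    have h: "y^2 = poly f x" "poly (\<Prod>l\<in>Lam. [:- l, 1:]) x \<noteq> 0"
      using p unfolding pxy good_points_def by auto
    have "x \<notin> Lam"
    proof
      assume xL: "x \<in> Lam"
      have "poly (\<Prod>l\<in>Lam. [:- l, 1:]) x = (\<Prod>l\<in>Lam. x - l)" by (simp add: poly_prod)
      also have "\<dots> = 0" using xL by (intro prod_zero) auto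
      finally show False using h by simp
    qed
    thus "p \<in> (\<Union>x\<in>-Lam. {x} \<times> {y. y^2 = poly f x})" using h pxy by auto
  qed
  have "card (good_points f Lam) \<le> card (\<Union>x\<in>-Lam. {x} \<times> {y. y^2 = poly f x})"
    by (intro card_mono sub) simp
  also have "\<dots> \<le> (\<Sum>x\<in>-Lam. card ({x} \<times> {y. y^2 = poly f x}))"
    by (rule card_UN_le) simp
  also have "\<dots> \<le> (\<Sum>x\<in>-Lam. 2)"
    by (intro sum_mono) (simp add: card_cartesian_product card_sq_le)
  also have "\<dots> = 2 * card (-Lam)" by simp
  also have "card (-Lam) = CARD('a) - card Lam" by (simp add: Compl_eq_Diff_UNIV card_Diff_subset)
  finally show ?thesis .
qed

lemma adm_bound:
  fixes f :: "'a::{finite,field} poly"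
  assumes "admissible_J f g X T J"
  shows "4 * J + X + T + 6 * g + 2 \<le> 2 * CARD('a)"
proof -
  obtain lam :: "nat \<Rightarrow> 'a" where inj: "inj_on lam {1..J}"
    and c: "card (good_points f (lam ` {1..J})) \<ge> 2 * J + X + T + 6 * g + 2"
    using assms unfolding admissible_J_def by blast
  have cl: "card (lam ` {1..J}) = J" using inj by (simp add: card_image)
  have "card (lam ` {1..J}) \<le> CARD('a)" by (rule card_mono) auto
  thus ?thesis using c card_good[of f "lam ` {1..J}"] cl by linarith
qed

theorem proposition4p9:
  fixes f :: "'a::{finite,field} poly" and q g X T :: nat
  assumes q_pp: "\<exists>p k. prime p \<and> k > 0 \<and> q = p ^ k" and q_odd: "odd q"
    and card_field: "CARD('a) = q ^ 2"
    and g_pos: "g \<ge> 1" and X_pos: "X > 0" and T_pos: "T > 0"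
    and f_monic: "lead_coeff f = 1" and f_deg: "degree f = 2 * g + 1"
    and f_sqf: "squarefree f"
    and J_exists: "\<exists>J. admissible_J f g X T J"
    and cond: "X + T \<ge> 3 * (2 * q + 3) \<and> ((g = 1 \<and> q > 31) \<or> (g > 1 \<and> q > 5))"
  shows "R_max_H q X T > R_max_Y f g X T"
proof -
  obtain J0 where J0: "admissible_J f g X T J0" using J_exists by blast
  define J where "J = J_max_Y f g X T"
  have "admissible_J f g X T J"
    unfolding J_def J_max_Y_def
  proof (rule GreatestI_nat[where P="admissible_J f g X T", OF J0])
    fix y assume "admissible_J f g X T y"
    from adm_bound[OF this] show "y \<le> 2 * CARD('a)" by linarith
  qed
  from adm_bound[OF this] card_field have Jb: "4 * J + X + T + 6 * g + 2 \<le> 2 * q^2" by simp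
  have q7: "q \<ge> 7" using cond q_odd by (auto elim: oddE)
  have "q \<noteq> 32" using q_odd by auto
  hence gq: "real g \<ge> 2 \<or> (real g = 1 \<and> real q \<ge> 33)" using cond by auto
  define a :: int where "a = int q^3 - 3 * int q^2 + int q + 1 - int X - int T"
  define m :: int where "m = \<lfloor>(real q ^ 3 - 3 * real q ^ 2 + real q + 1 - (real X + real T)) / (2 * real q)\<rfloor>"
  have "(real q ^ 3 - 3 * real q ^ 2 + real q + 1 - (real X + real T)) / (2 * real q)
        = of_int a / of_int (2 * int q)" unfolding a_def by simp
  hence mdiv: "m = a div (2 * int q)" unfolding m_def by (simp only: floor_divide_of_int_eq)
  have "a mod (2 * int q) < 2 * int q" using q7 by simp
  moreover have "a = 2 * int q * (a div (2 * int q)) + a mod (2 * int q)" by simp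
  ultimately have "2 * int q * m \<ge> a - 2 * int q + 1" unfolding mdiv by linarith
  hence "real_of_int (2 * int q * m) \<ge> real_of_int (a - 2 * int q + 1)" by linarith
  hence mb: "2 * real q * real_of_int m \<ge> real q^3 - 3*real q^2 + real q + 1 - (real X + real T) - 2 * real q + 1"
    unfolding a_def by simp
  have "real (4 * J + X + T + 6 * g + 2) \<le> real (2 * q^2)" using Jb by (simp only: of_nat_le_iff)
  hence Jbr: "2 * real (2*J) + (real X + real T) + 6 * real g + 2 \<le> 2 * real q^2" by simp
  have q7r: "real q \<ge> 7" using q7 by simp
  have g1r: "real g \<ge> 1" using g_pos by simp
  have "X + T \<ge> 6*q+9" using cond by simp
  hence s0r: "real X + real T \<ge> 6 * real q + 9" by (metis of_nat_add of_nat_le_iff of_nat_mult of_nat_numeral)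
  have u0r: "real (2*J) \<ge> 0" by simp
  note main = core[OF q7r g1r gq s0r u0r Jbr mb]
  show ?thesis
    unfolding R_max_H_def R_max_Y_def Let_def J_def[symmetric] m_def[symmetric]
    using main by (simp only: add.assoc of_nat_mult of_nat_numeral)
qed

end
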